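(* Under the hypotheses of the preceding statement ($\mu$-weakly convex $f$ with $\alpha$-sharp minimum on closed convex $Q$, initial point with $\min_{x_*\in X_*}\|x^0-x_*\|_2\le\alpha\gamma/\mu$ for some $\gamma\in(0,1)$, projected subgradient method with Polyak step $h_k=(f(x^k)-f^* )/\|\nabla f(x^k)\|_2^2$, iterates $x^0,\dots,x^k\notin X_*$), assume in addition that $f$ is $M$-Lipschitz. Then $$\min_{x_*\in X_*}\|x^{k+1}-x_*\|_2^2\le\Bigl(1-\frac{\alpha^2(1-\gamma)}{M^2}\Bigr)^{k+1}\min_{x_*\in X_*}\|x^0-x_*\|_2^2.$$
   Context: $f$ is $\mu$-weakly convex if $x\mapsto f(x)+\frac{\mu}{2}\|x\|_2^2$ is convex; subgradients are taken in the sense $f(y)\ge f(x)+\langle v,y-x\rangle+o(\|y-x\|_2)$. $X_*$ is the set of minimizers of $f$ on $Q$, $f^*=\min_Q f$, $\operatorname{Pr}_Q$ the Euclidean projection. *)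

theory Defs
  imports "HOL-Analysis.Analysis"
begin

definition weakly_convex :: "real \<Rightarrow> ('a::euclidean_space \<Rightarrow> real) \<Rightarrow> bool" where
  "weakly_convex mu f \<longleftrightarrow> convex_on UNIV (\<lambda>x. f x + mu / 2 * (norm x)\<^sup>2)"

text \<open>Frechet (regular) subgradient: f y \<ge> f x + <v, y - x> + o(|y - x|).\<close>
definition subgrad :: "('a::euclidean_space \<Rightarrow> real) \<Rightarrow> 'a \<Rightarrow> 'a \<Rightarrow> bool" where
  "subgrad f x v \<longleftrightarrow>
     (\<forall>e>0. \<exists>d>0. \<forall>y. norm (y - x) < d \<longrightarrow> f y \<ge> f x + inner v (y - x) - e * norm (y - x))"

definition fstar :: "('a \<Rightarrow> real) \<Rightarrow> 'a set \<Rightarrow> real" where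
  "fstar f Q = Inf (f ` Q)"

definition argmin_set :: "('a \<Rightarrow> real) \<Rightarrow> 'a set \<Rightarrow> 'a set" where
  "argmin_set f Q = {x \<in> Q. \<forall>y\<in>Q. f x \<le> f y}"

definition sharp_min :: "real \<Rightarrow> ('a::euclidean_space \<Rightarrow> real) \<Rightarrow> 'a set \<Rightarrow> bool" where
  "sharp_min alpha f Q \<longleftrightarrow> argmin_set f Q \<noteq> {} \<and>
     (\<forall>x\<in>Q. f x - fstar f Q \<ge> alpha * infdist x (argmin_set f Q))"

end

theory Submission
  imports Defs
begin

lemma subgrad_wc:
  fixes f :: "'a::euclidean_space \<Rightarrow> real"
  assumes wc: "weakly_convex mu f" and mu: "mu \<ge> 0" and sg: "subgrad f x g"
  shows "f y \<ge> f x + inner g (y - x) - mu / 2 * (norm (y - x))\<^sup>2"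
proof (cases "y = x")
  case True then show ?thesis by simp
next
  case False
  define w where "w = y - x"
  have wpos: "norm w > 0" using False by (simp add: w_def)
  have key: "f y - f x - inner g w + mu/2 * (norm w)^2 \<ge> - e * norm w" if e: "e > 0" for e
  proof -
    obtain d where d: "d > 0" "\<And>z. norm (z - x) < d \<Longrightarrow> f z \<ge> f x + inner g (z - x) - e * norm (z - x)"
      using sg e unfolding subgrad_def by blast
    define t where "t = min 1 (d / (2 * norm w))"
    have t0: "t > 0" using d wpos by (simp add: t_def)
    have t1: "t \<le> 1" by (simp add: t_def)
    have "t * norm w \<le> d / (2 * norm w) * norm w" unfolding t_def by (rule mult_right_mono[OF min.cobounded2]) simp
    also have "\<dots> = d/2" using wpos by simp
    finally have tn: "norm ((x + t *\<^sub>R w) - x) < d" using d t0 by simp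
    have lo: "f (x + t *\<^sub>R w) \<ge> f x + t * inner g w - e * (t * norm w)"
      using d(2)[OF tn] t0 by simp
    have cv: "f (x + t *\<^sub>R w) + mu/2 * (norm (x + t *\<^sub>R w))^2 \<le>
        (1 - t) * (f x + mu/2 * (norm x)^2) + t * (f y + mu/2 * (norm y)^2)"
    proof -
      have "convex_on UNIV (\<lambda>x. f x + mu / 2 * (norm x)\<^sup>2)" using wc by (simp add: weakly_convex_def)
      from convex_onD[OF this, of t x y] t0 t1
      have "f ((1 - t) *\<^sub>R x + t *\<^sub>R y) + mu/2 * (norm ((1 - t) *\<^sub>R x + t *\<^sub>R y))^2 \<le>
        (1 - t) * (f x + mu/2 * (norm x)^2) + t * (f y + mu/2 * (norm y)^2)" by simp
      moreover have "(1 - t) *\<^sub>R x + t *\<^sub>R y = x + t *\<^sub>R w" by (simp add: w_def algebra_simps)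
      ultimately show ?thesis by simp
    qed
    have n1: "(norm (x + t *\<^sub>R w))^2 = (norm x)^2 + 2 * t * inner x w + t^2 * (norm w)^2"
      unfolding power2_norm_eq_inner by (simp add: inner_add_left inner_add_right power2_eq_square algebra_simps inner_commute)
    have n2: "(norm y)^2 = (norm x)^2 + 2 * inner x w + (norm w)^2"
      unfolding power2_norm_eq_inner by (simp add: w_def inner_diff_left inner_diff_right algebra_simps inner_commute)
    have eq: "(1 - t) * (f x + mu/2 * (norm x)^2) + t * (f y + mu/2 * (norm y)^2) - mu/2 * (norm (x + t *\<^sub>R w))^2
       = (1 - t) * f x + t * f y + mu/2 * t * (1 - t) * (norm w)^2"
      unfolding n1 n2 by (simp add: field_simps power2_eq_square)
    have eq2: "t * (f y - f x - inner g w + e * norm w + mu/2 * (1 - t) * (norm w)^2) =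
      ((1 - t) * f x + t * f y + mu/2 * t * (1 - t) * (norm w)^2) - (f x + t * inner g w - e * (t * norm w))"
      by (simp add: algebra_simps)
    from cv lo eq eq2 have "t * (f y - f x - inner g w + e * norm w + mu/2 * (1 - t) * (norm w)^2) \<ge> 0"
      by linarith
    hence "f y - f x - inner g w + e * norm w + mu/2 * (1 - t) * (norm w)^2 \<ge> 0"
      using t0 by (simp add: zero_le_mult_iff)
    moreover have "mu/2 * (1 - t) * (norm w)^2 \<le> mu/2 * (norm w)^2" 
      using t0 mu by (intro mult_right_mono) (auto simp: algebra_simps)
    ultimately show ?thesis by linarith
  qed
  have "f y - f x - inner g w + mu/2 * (norm w)^2 \<ge> 0"
  proof (rule ccontr)
    assume "\<not> ?thesis"
    then have neg: "f y - f x - inner g w + mu/2 * (norm w)^2 < 0" by simp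
    define e where "e = - (f y - f x - inner g w + mu/2 * (norm w)^2) / (2 * norm w)"
    have "e > 0" using neg wpos by (simp add: e_def divide_pos_pos)
    from key[OF this] have "f y - f x - inner g w + mu/2 * (norm w)^2 \<ge> - e * norm w" .
    also have "- e * norm w = (f y - f x - inner g w + mu/2 * (norm w)^2) / 2" using wpos by (simp add: e_def field_simps)
    finally have "(f y - f x - inner g w + mu/2 * (norm w)^2) / 2 \<le> f y - f x - inner g w + mu/2 * (norm w)^2" .
    moreover have "\<And>S::real. S/2 \<le> S \<Longrightarrow> S < 0 \<Longrightarrow> False" by linarith
    ultimately show False using neg by blast
  qed
  then show ?thesis by (simp add: w_def)
qed
lemma subgrad_lip:
  fixes f :: "'a::euclidean_space \<Rightarrow> real"
  assumes L: "M-lipschitz_on UNIV f" and sg: "subgrad f x g"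
  shows "norm g \<le> M"
proof (rule field_le_epsilon)
  fix e :: real assume e: "0 < e"
  show "norm g \<le> M + e"
  proof (cases "g = 0")
    case True then show ?thesis using lipschitz_on_nonneg[OF L] e by simp
  next
    case False
    obtain d where d: "d > 0" "\<And>z. norm (z - x) < d \<Longrightarrow> f z \<ge> f x + inner g (z - x) - e * norm (z - x)"
      using sg e unfolding subgrad_def by blast
    define u where "u = (1 / norm g) *\<^sub>R g"
    have nu: "norm u = 1" using False by (simp add: u_def)
    have gu: "inner g u = norm g" using False by (simp add: u_def power2_norm_eq_inner[symmetric] power2_eq_square)
    define t where "t = d / 2"
    have t0: "t > 0" using d by (simp add: t_def)
    have "norm ((x + t *\<^sub>R u) - x) < d" using nu d t0 by (simp add: t_def)
    from d(2)[OF this] have lo: "f (x + t *\<^sub>R u) \<ge> f x + t * norm g - e * t"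
      using nu gu t0 by simp
    have "dist (f (x + t *\<^sub>R u)) (f x) \<le> M * dist (x + t *\<^sub>R u) x"
      using lipschitz_onD[OF L] by blast
    then have up: "f (x + t *\<^sub>R u) - f x \<le> M * t" using nu t0 by (simp add: dist_norm)
    from lo up have "t * norm g \<le> t * (M + e)" by (simp add: algebra_simps)
    then show ?thesis using t0 by simp
  qed
qed

lemma argmin_closed:
  fixes f :: "'a::euclidean_space \<Rightarrow> real"
  assumes "closed Q" "continuous_on UNIV f"
  shows "closed (argmin_set f Q)"
proof -
  have "argmin_set f Q = Q \<inter> (\<Inter>y\<in>Q. {x. f x \<le> f y})" by (auto simp: argmin_set_def)
  moreover have "closed {x. f x \<le> f y}" for y
    using assms(2) by (intro closed_Collect_le) (auto intro: continuous_on_const)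
  ultimately show ?thesis using assms(1) by (simp add: closed_INT closed_Int)
qed

lemma one_step:
  fixes f :: "'a::euclidean_space \<Rightarrow> real"
  assumes Qc: "closed Q" and Qv: "convex Q" and Qne: "Q \<noteq> {}"
    and mu: "mu > 0" and al: "alpha > 0"
    and wc: "weakly_convex mu f"
    and sh: "sharp_min alpha f Q"
    and L: "M-lipschitz_on UNIV f"
    and ga: "0 < gamma" "gamma < 1"
    and xQ: "x \<in> Q"
    and dx: "infdist x (argmin_set f Q) \<le> alpha * gamma / mu"
    and sg: "subgrad f x g"
    and x': "x' = closest_point Q (x - ((f x - fstar f Q) / (norm g)\<^sup>2) *\<^sub>R g)"
    and xn: "x \<notin> argmin_set f Q"
  shows "(infdist x' (argmin_set f Q))\<^sup>2 \<le> (1 - alpha\<^sup>2 * (1 - gamma) / M\<^sup>2) * (infdist x (argmin_set f Q))\<^sup>2"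
    and "0 \<le> 1 - alpha\<^sup>2 * (1 - gamma) / M\<^sup>2"
proof -
  define X where "X = argmin_set f Q"
  have Xne: "X \<noteq> {}" using sh by (simp add: sharp_min_def X_def)
  have Xc: "closed X" unfolding X_def
    by (rule argmin_closed[OF Qc lipschitz_on_continuous_on[OF L]])
  obtain z where zX: "z \<in> X" and dz: "infdist x X = dist x z"
    using infdist_attains_inf[OF Xc Xne] by blast
  have zQ: "z \<in> Q" and zmin: "\<And>y. y \<in> Q \<Longrightarrow> f z \<le> f y" using zX by (auto simp: X_def argmin_set_def)
  have fs: "fstar f Q = f z" unfolding fstar_def
    by (rule cInf_eq_minimum) (use zQ zmin in auto)
  define d where "d = norm (x - z)"
  have dd: "infdist x X = d" using dz by (simp add: d_def dist_norm)
  have dpos: "d > 0" using xn zX by (auto simp: d_def X_def)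
  define D where "D = f x - fstar f Q"
  have sharp: "D \<ge> alpha * d" using sh xQ dd unfolding sharp_min_def D_def X_def by force
  have Dpos: "D > 0" using sharp al dpos by (smt (verit) mult_pos_pos)
  have wcz: "f z \<ge> f x + inner g (z - x) - mu / 2 * (norm (z - x))\<^sup>2"
    using subgrad_wc[OF wc _ sg] mu by simp
  have nzx: "norm (z - x) = d" by (simp add: d_def norm_minus_commute)
  have ip: "inner g (x - z) \<ge> D - mu/2 * d^2"
    using wcz nzx fs by (simp add: D_def inner_diff_right)
  have "mu * d \<le> alpha * gamma" using dx dd mu by (simp add: X_def field_simps)
  hence "mu * d * d \<le> alpha * gamma * d" using dpos by (simp add: mult_right_mono)
  also have "\<dots> = gamma * (alpha * d)" by simp
  also have "\<dots> \<le> gamma * D" using sharp ga by (simp add: mult_left_mono)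
  finally have "mu * d^2 \<le> gamma * D" by (simp add: power2_eq_square)
  with ip have ip2: "inner g (x - z) \<ge> (1 - gamma/2) * D" by (simp add: algebra_simps)
  have gne: "g \<noteq> 0"
  proof
    assume "g = 0"
    with ip2 have "(1 - gamma/2) * D \<le> 0" by simp
    moreover have "(1 - gamma/2) * D > 0" using ga Dpos by simp
    ultimately show False by simp
  qed
  have gM: "norm g \<le> M" by (rule subgrad_lip[OF L sg])
  have gpos: "norm g > 0" using gne by simp
  have Mpos: "M > 0" using gM gpos by linarith
  define h where "h = D / (norm g)^2"
  define y where "y = x - h *\<^sub>R g"
  have x'y: "x' = closest_point Q y" using x' by (simp add: y_def h_def D_def)
  have "dist x' z = dist (closest_point Q y) (closest_point Q z)"
    using x'y closest_point_self[OF zQ] by simp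
  also have "\<dots> \<le> dist y z" by (rule closest_point_lipschitz[OF Qv Qc Qne])
  finally have x'z: "norm (x' - z) \<le> norm (y - z)" by (simp add: dist_norm)
  have "(norm (y - z))^2 = (norm ((x - z) - h *\<^sub>R g))^2" by (simp add: y_def algebra_simps)
  also have "\<dots> = d^2 - 2 * h * inner g (x - z) + h^2 * (norm g)^2"
    unfolding power2_norm_eq_inner d_def
    by (simp add: inner_diff_left inner_diff_right inner_commute power2_eq_square algebra_simps)
  also have "h^2 * (norm g)^2 = h * D" using gpos by (simp add: h_def power2_eq_square field_simps)
  also have "d^2 - 2 * h * inner g (x - z) + h * D \<le> d^2 - 2 * h * ((1 - gamma/2) * D) + h * D"
  proof -
    have h0: "2 * h \<ge> 0" using Dpos by (simp add: h_def)
    have "2 * h * ((1 - gamma/2) * D) \<le> 2 * h * inner g (x - z)"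
      by (rule mult_left_mono[OF ip2 h0])
    then show ?thesis by linarith
  qed
  also have "\<dots> = d^2 - (1 - gamma) * (D^2 / (norm g)^2)" using gpos by (simp add: h_def power2_eq_square field_simps)
  also have "\<dots> \<le> d^2 - (1 - gamma) * (alpha^2 * d^2 / M^2)"
  proof -
    have "alpha^2 * d^2 \<le> D^2" using sharp al dpos
      by (metis power_mono power_mult_distrib mult_pos_pos less_imp_le)
    moreover have "D^2 / M^2 \<le> D^2 / (norm g)^2"
      using gM gpos Mpos by (intro divide_left_mono power_mono) auto
    ultimately have "alpha^2 * d^2 / M^2 \<le> D^2 / (norm g)^2"
      by (smt (verit) divide_right_mono zero_le_power2)
    then have "(1 - gamma) * (alpha^2 * d^2 / M^2) \<le> (1 - gamma) * (D^2 / (norm g)^2)"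
      using ga by (intro mult_left_mono) auto
    then show ?thesis by linarith
  qed
  also have "\<dots> = (1 - alpha\<^sup>2 * (1 - gamma) / M\<^sup>2) * d^2" by (simp add: field_simps)
  finally have main: "(norm (y - z))^2 \<le> (1 - alpha\<^sup>2 * (1 - gamma) / M\<^sup>2) * d^2" .
  have "infdist x' X \<le> norm (x' - z)" using infdist_le[OF zX] by (simp add: dist_norm)
  hence "(infdist x' X)^2 \<le> (norm (x' - z))^2" by (simp add: power_mono infdist_nonneg)
  also have "\<dots> \<le> (norm (y - z))^2" using x'z by (simp add: power_mono)
  finally have fin: "(infdist x' X)^2 \<le> (1 - alpha\<^sup>2 * (1 - gamma) / M\<^sup>2) * d^2" using main by linarith
  then show "(infdist x' (argmin_set f Q))\<^sup>2 \<le> (1 - alpha\<^sup>2 * (1 - gamma) / M\<^sup>2) * (infdist x (argmin_set f Q))\<^sup>2"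
    using dd by (simp add: X_def)
  have "0 \<le> (1 - alpha\<^sup>2 * (1 - gamma) / M\<^sup>2) * d^2" using fin by (smt (verit) zero_le_power2)
  then show "0 \<le> 1 - alpha\<^sup>2 * (1 - gamma) / M\<^sup>2" using dpos by (simp add: zero_le_mult_iff)
qed

theorem corollary2:
  fixes f :: "'a::euclidean_space \<Rightarrow> real"
    and Q :: "'a set"
    and mu alpha gamma M :: real
    and x g :: "nat \<Rightarrow> 'a"
    and k :: nat
  assumes "closed Q" and "convex Q" and "Q \<noteq> {}"
    and "mu > 0" and "alpha > 0"
    and "weakly_convex mu f"
    and "sharp_min alpha f Q"
    and "M-lipschitz_on UNIV f"
    and "0 < gamma" and "gamma < 1"
    and "x 0 \<in> Q"
    and "infdist (x 0) (argmin_set f Q) \<le> alpha * gamma / mu"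
    and "\<And>i. i \<le> k \<Longrightarrow> subgrad f (x i) (g i)"
    and "\<And>i. i \<le> k \<Longrightarrow> x (Suc i) = closest_point Q
            (x i - ((f (x i) - fstar f Q) / (norm (g i))\<^sup>2) *\<^sub>R g i)"
    and "\<And>i. i \<le> k \<Longrightarrow> x i \<notin> argmin_set f Q"
  shows "(infdist (x (Suc k)) (argmin_set f Q))\<^sup>2
           \<le> (1 - alpha\<^sup>2 * (1 - gamma) / M\<^sup>2) ^ (Suc k) * (infdist (x 0) (argmin_set f Q))\<^sup>2"
proof -
  define X where "X = argmin_set f Q"
  define c where "c = 1 - alpha\<^sup>2 * (1 - gamma) / M\<^sup>2"
  define d0 where "d0 = infdist (x 0) X"
  have c1: "c \<le> 1" using assms(9,10) by (simp add: c_def)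
  have P: "x i \<in> Q \<and> infdist (x i) X \<le> d0 \<and> (infdist (x i) X)\<^sup>2 \<le> c ^ i * d0\<^sup>2" if "i \<le> Suc k" for i
    using that
  proof (induction i)
    case 0 then show ?case using assms(11) by (simp add: d0_def)
  next
    case (Suc i)
    then have ik: "i \<le> k" by simp
    with Suc.IH have IH: "x i \<in> Q" "infdist (x i) X \<le> d0" "(infdist (x i) X)\<^sup>2 \<le> c ^ i * d0\<^sup>2" by auto
    have dx: "infdist (x i) (argmin_set f Q) \<le> alpha * gamma / mu" using IH(2) assms(12) by (simp add: X_def d0_def)
    note os = one_step[OF assms(1-10) IH(1) dx assms(13)[OF ik] assms(14)[OF ik] assms(15)[OF ik]]
    have s1: "(infdist (x (Suc i)) X)\<^sup>2 \<le> c * (infdist (x i) X)\<^sup>2" using os(1) by (simp add: X_def c_def)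
    have c0: "c \<ge> 0" using os(2) by (simp add: c_def)
    have xQ: "x (Suc i) \<in> Q" using assms(14)[OF ik] closest_point_in_set[OF assms(1,3)] by simp
    have "c * (infdist (x i) X)\<^sup>2 \<le> (infdist (x i) X)\<^sup>2" using c1 c0 by (intro mult_left_le_one_le) auto
    with s1 have "(infdist (x (Suc i)) X)\<^sup>2 \<le> (infdist (x i) X)\<^sup>2" by linarith
    hence "infdist (x (Suc i)) X \<le> infdist (x i) X"
      by (rule power2_le_imp_le) (simp add: infdist_nonneg)
    with IH(2) have d: "infdist (x (Suc i)) X \<le> d0" by linarith
    have "c * (infdist (x i) X)\<^sup>2 \<le> c * (c ^ i * d0\<^sup>2)" using IH(3) c0 by (rule mult_left_mono)
    with s1 have "(infdist (x (Suc i)) X)\<^sup>2 \<le> c ^ Suc i * d0\<^sup>2" by simp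
    with xQ d show ?case by simp
  qed
  from P[of "Suc k"] show ?thesis by (simp add: X_def c_def d0_def)
qed

end
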